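(* Let $\langle A;\cdot\rangle$ be a groupoid with an identity element $1$ (i.e. $1\cdot a=a\cdot 1=a$ for all $a\in A$). Then $\langle A;\cdot\rangle$ is an Abelian algebra if and only if $\langle A;\cdot\rangle$ is a commutative semigroup such that for all $a,b\in A$ the equation $a\cdot x=b$ has at most one solution $x\in A$.
   Context: A groupoid is an algebra $\langle A;\cdot\rangle$ with one binary operation. A polynomial operation of an algebra is an operation obtained from a term by substituting elements of the algebra for some of its variables. An algebra is called Abelian if for every polynomial operation $t(x,y_1,\ldots,y_n)$ and all elements $u,v,c_1,\ldots,c_n,d_1,\ldots,d_n$ of the algebra, $t(u,c_1,\ldots,c_n)=t(u,d_1,\ldots,d_n)$ implies $t(v,c_1,\ldots,c_n)=t(v,d_1,\ldots,d_n)$. *)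

theory Defs
  imports Main
begin

text \<open>Variables are indexed by natural numbers; variable 0 plays the role of x,
  the remaining variables play the role of y_1, ..., y_n.\<close>
datatype 'a pterm = Var nat | Cst 'a | Mul "'a pterm" "'a pterm"

fun peval :: "('a \<Rightarrow> 'a \<Rightarrow> 'a) \<Rightarrow> (nat \<Rightarrow> 'a) \<Rightarrow> 'a pterm \<Rightarrow> 'a" where
  "peval m \<rho> (Var i) = \<rho> i"
| "peval m \<rho> (Cst a) = a"
| "peval m \<rho> (Mul s t) = m (peval m \<rho> s) (peval m \<rho> t)"

definition abelian_groupoid :: "('a \<Rightarrow> 'a \<Rightarrow> 'a) \<Rightarrow> bool" where
  "abelian_groupoid m \<longleftrightarrow>
     (\<forall>(t :: 'a pterm) u v (c :: nat \<Rightarrow> 'a) d.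
        peval m (c(0 := u)) t = peval m (d(0 := u)) t \<longrightarrow>
        peval m (c(0 := v)) t = peval m (d(0 := v)) t)"

end

theory Submission
  imports Defs
begin

fun pw :: "('a \<Rightarrow> 'a \<Rightarrow> 'a) \<Rightarrow> 'a \<Rightarrow> 'a \<Rightarrow> nat \<Rightarrow> 'a" where
  "pw m e u 0 = e"
| "pw m e u (Suc n) = m u (pw m e u n)"

fun deg :: "'a pterm \<Rightarrow> nat" where
  "deg (Var i) = (if i = 0 then 1 else 0)"
| "deg (Cst a) = 0"
| "deg (Mul s t) = deg s + deg t"

lemma pw_add:
  assumes A: "\<forall>a b c. m (m a b) c = m a (m b c)"
    and unit: "\<forall>a. m e a = a \<and> m a e = a"
  shows "pw m e u (i + j) = m (pw m e u i) (pw m e u j)"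
  by (induction i) (use A unit in auto)

lemma peval_form:
  assumes A: "\<forall>a b c. m (m a b) c = m a (m b c)"
    and C: "\<forall>a b. m a b = m b a"
    and unit: "\<forall>a. m e a = a \<and> m a e = a"
  shows "peval m (c(0 := u)) t = m (pw m e u (deg t)) (peval m (c(0 := e)) t)"
proof (induction t)
  case (Var i) then show ?case using unit by auto
next
  case (Cst a) then show ?case using unit by auto
next
  case (Mul s t)
  let ?P = "pw m e u (deg s)" and ?Q = "pw m e u (deg t)"
  let ?S = "peval m (c(0 := e)) s" and ?T = "peval m (c(0 := e)) t"
  have "peval m (c(0 := u)) (Mul s t) = m (m ?P ?S) (m ?Q ?T)" by (simp only: peval.simps Mul.IH)
  also have "\<dots> = m (m ?P ?Q) (m ?S ?T)"
    using A C by metis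
  also have "\<dots> = m (pw m e u (deg (Mul s t))) (peval m (c(0 := e)) (Mul s t))"
    using pw_add[OF A unit] by simp
  finally show ?case .
qed

theorem mainTheorem1:
  fixes m :: "'a \<Rightarrow> 'a \<Rightarrow> 'a" and e :: 'a
  assumes unit: "\<forall>a. m e a = a \<and> m a e = a"
  shows "abelian_groupoid m \<longleftrightarrow>
    ((\<forall>a b c. m (m a b) c = m a (m b c)) \<and>
     (\<forall>a b. m a b = m b a) \<and>
     (\<forall>a b x y. m a x = b \<and> m a y = b \<longrightarrow> x = y))"
proof
  assume ab: "abelian_groupoid m"
  have TC: "\<And>t u v c d. peval m (c(0 := u)) t = peval m (d(0 := u)) t \<Longrightarrow>
        peval m (c(0 := v)) t = peval m (d(0 := v)) t"
    using ab unfolding abelian_groupoid_def by blast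
  have C: "\<forall>a b. m a b = m b a"
  proof (intro allI)
    fix v b
    have "\<And>a. m (m a v) b = m (m a b) v"
    proof -
      fix a
      show "m (m a v) b = m (m a b) v"
        using TC[of "\<lambda>i. if i = 1 then a else b" e "Mul (Mul (Var 1) (Var 0)) (Var 2)"
            "\<lambda>i. if i = 1 then m a b else e" v] unit by auto
    qed
    from this[of e] show "m v b = m b v" using unit by simp
  qed
  have A0: "\<And>a v b. m a (m v b) = m (m a b) v"
    subgoal for a v b
      using TC[of "\<lambda>i. if i = 1 then a else b" e "Mul (Var 1) (Mul (Var 0) (Var 2))"
            "\<lambda>i. if i = 1 then m a b else e" v] unit by auto
    done
  have A: "\<forall>a b c. m (m a b) c = m a (m b c)"
    using A0 C by metis
  have K: "\<forall>a b x y. m a x = b \<and> m a y = b \<longrightarrow> x = y"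
  proof (intro allI impI)
    fix a b x y assume h: "m a x = b \<and> m a y = b"
    show "x = y"
      using TC[of "\<lambda>_. x" a "Mul (Var 0) (Var 1)" "\<lambda>_. y" e] h unit by auto
  qed
  show "(\<forall>a b c. m (m a b) c = m a (m b c)) \<and> (\<forall>a b. m a b = m b a) \<and>
     (\<forall>a b x y. m a x = b \<and> m a y = b \<longrightarrow> x = y)" using A C K by blast
next
  assume H: "(\<forall>a b c. m (m a b) c = m a (m b c)) \<and> (\<forall>a b. m a b = m b a) \<and>
     (\<forall>a b x y. m a x = b \<and> m a y = b \<longrightarrow> x = y)"
  then have A: "\<forall>a b c. m (m a b) c = m a (m b c)" and C: "\<forall>a b. m a b = m b a"
    and K: "\<forall>a b x y. m a x = b \<and> m a y = b \<longrightarrow> x = y" by auto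
  note F = peval_form[OF A C unit]
  show "abelian_groupoid m"
    unfolding abelian_groupoid_def
  proof (intro allI impI)
    fix t u v and c d :: "nat \<Rightarrow> 'a"
    assume h: "peval m (c(0 := u)) t = peval m (d(0 := u)) t"
    have "peval m (c(0 := e)) t = peval m (d(0 := e)) t"
      using h F[of c u t] F[of d u t] K by metis
    then show "peval m (c(0 := v)) t = peval m (d(0 := v)) t"
      using F[of c v t] F[of d v t] by simp
  qed
qed

end
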